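(* Let $\alpha,\beta,r>0$ and let the monopoly demand be $D_M(p)=(\alpha-p)/\beta$. Consider a monopolist with remaining capacity following $dx(t)=-D_M(p(x(t)))\,dt$, $x(0)=x\ge0$ (deterministic, $\sigma=0$), choosing a Markov price $p(\cdot)\ge0$, with value function $$v_M(x)=\sup_{p\ge0}\int_0^\infty e^{-rt}p(x(t))D_M(p(x(t)))\mathbf{1}_{\{x(t)>0\}}\,dt .$$ Then $$v_M(x)=\frac{\alpha^2}{4\beta r}\Big[\mathbf{W}\big(-e^{-\mu x-1}\big)+1\Big]^2,\qquad \mu=\frac{2\beta r}{\alpha},$$ where $\mathbf{W}$ is the Lambert $W$ function (principal branch), defined by $Y=\mathbf{W}(Y)e^{\mathbf{W}(Y)}$ on $Y\ge -e^{-1}$.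
   Context: The associated Bellman equation is $\frac{1}{4\beta}(v_M'-\alpha)^2-rv_M=0$ with $v_M(0)=0$, and solutions with $\lim_{x\to\infty}v_M'(x)=0$ are sought. *)

theory Defs
  imports "HOL-Analysis.Analysis"
begin

definition lambertW :: "real \<Rightarrow> real" where
  "lambertW y = (THE w. w \<ge> -1 \<and> w * exp w = y)"

definition demandM :: "real \<Rightarrow> real \<Rightarrow> real \<Rightarrow> real" where
  "demandM \<alpha> \<beta> p = (\<alpha> - p) / \<beta>"

definition revenueM :: "real \<Rightarrow> real \<Rightarrow> real \<Rightarrow> (real \<Rightarrow> real) \<Rightarrow> (real \<Rightarrow> real) \<Rightarrow> real \<Rightarrow> real" where
  "revenueM \<alpha> \<beta> r p X t =
     exp (- r * t) * p (X t) * demandM \<alpha> \<beta> (p (X t)) * (if X t > 0 then 1 else 0)"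

definition admissibleM :: "real \<Rightarrow> real \<Rightarrow> real \<Rightarrow> real \<Rightarrow> (real \<Rightarrow> real) \<Rightarrow> (real \<Rightarrow> real) \<Rightarrow> bool" where
  "admissibleM \<alpha> \<beta> r x p X \<longleftrightarrow>
     (\<forall>y. p y \<ge> 0) \<and> X 0 = x \<and>
     (\<forall>t\<ge>0. (X has_real_derivative (- demandM \<alpha> \<beta> (p (X t)))) (at t within {0..})) \<and>
     set_integrable lborel {0..} (revenueM \<alpha> \<beta> r p X)"

definition valueM :: "real \<Rightarrow> real \<Rightarrow> real \<Rightarrow> real \<Rightarrow> real" where
  "valueM \<alpha> \<beta> r x =
     Sup {J. \<exists>p X. admissibleM \<alpha> \<beta> r x p X \<and>
                  J = (LINT t:{0..}|lborel. revenueM \<alpha> \<beta> r p X t)}"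

end

theory Submission
  imports Defs
begin

lemma wexp_deriv: "((\<lambda>w::real. w * exp w) has_real_derivative (1 + w) * exp w) (at w)"
  by (auto intro!: derivative_eq_intros simp: algebra_simps)

lemma wexp_strict_mono:
  fixes a b :: real
  assumes "-1 \<le> a" "a < b" shows "a * exp a < b * exp b"
proof (rule DERIV_pos_imp_increasing_open[OF assms(2)])
  fix x assume "a < x" "x < b"
  then show "\<exists>y. ((\<lambda>w. w * exp w) has_real_derivative y) (at x) \<and> 0 < y"
    using assms by (intro exI[of _ "(1+x) * exp x"]) (auto intro: wexp_deriv)
next
  show "continuous_on {a..b} (\<lambda>w::real. w * exp w)" by (intro continuous_intros)
qed

lemma lambertW_eq:
  assumes "-1 \<le> w" "w * exp w = Y" shows "lambertW Y = w"
  unfolding lambertW_def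
proof (rule the_equality)
  fix v assume v: "-1 \<le> v \<and> v * exp v = Y"
  show "v = w"
  proof (rule ccontr)
    assume "v \<noteq> w"
    then consider "v < w" | "w < v" by linarith
    then show False
      using wexp_strict_mono[of v w] wexp_strict_mono[of w v] v assms by cases auto
  qed
qed (use assms in auto)

lemma lambertW_props:
  fixes Y :: real
  assumes "- exp (-1) \<le> Y" "Y < 0"
  shows "-1 \<le> lambertW Y \<and> lambertW Y < 0 \<and> lambertW Y * exp (lambertW Y) = Y"
proof -
  have "\<exists>w. -1 \<le> w \<and> w \<le> 0 \<and> w * exp w = Y"
    by (rule IVT) (use assms in \<open>auto intro!: continuous_intros simp: exp_minus field_simps\<close>)
  then obtain w where w: "-1 \<le> w" "w \<le> 0" "w * exp w = Y" by blast
  with assms have "w \<noteq> 0" by auto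
  with w lambertW_eq[OF w(1,3)] show ?thesis by auto
qed


lemma ln_strict: fixes u :: real assumes "0 < u" "u < 1" shows "ln u < u - 1"
proof -
  have "(\<lambda>t. t - 1 - ln t) u > (\<lambda>t. t - 1 - ln t) 1"
  proof (rule DERIV_neg_imp_decreasing_open[OF assms(2)])
    fix t assume t: "u < t" "t < 1"
    then show "\<exists>y. ((\<lambda>t. t - 1 - ln t) has_real_derivative y) (at t) \<and> y < 0"
      using assms by (intro exI[of _ "1 - 1/t"]) (auto intro!: derivative_eq_intros simp: field_simps)
  next
    show "continuous_on {u..1} (\<lambda>t. t - 1 - ln t)" using assms
      by (intro continuous_intros) auto
  qed
  then show ?thesis by simp
qed

lemma ln_quad: fixes u :: real assumes "0 < u" "u \<le> 1" shows "(1 - u)^2 \<le> 2 * (u - 1 - ln u)"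
proof -
  have "(\<lambda>t. 2 * (t - 1 - ln t) - (1 - t)^2) u \<ge> (\<lambda>t. 2 * (t - 1 - ln t) - (1 - t)^2) 1"
  proof (rule DERIV_nonpos_imp_decreasing_open[OF assms(2)])
    fix t assume t: "u < t" "t < 1"
    then show "\<exists>y. ((\<lambda>t. 2 * (t - 1 - ln t) - (1 - t)^2) has_real_derivative y) (at t) \<and> y \<le> 0"
      using assms
    proof (intro exI conjI)
      show "((\<lambda>t. 2 * (t - 1 - ln t) - (1 - t)^2) has_real_derivative (2 * (1 - 1/t) + 2 * (1 - t))) (at t)"
        using t assms by (auto intro!: derivative_eq_intros simp: field_simps)
      have "2 * (1 - 1/t) + 2 * (1 - t) = - 2 * (1 - t)^2 / t" using t assms
        by (simp add: field_simps power2_eq_square)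
      also have "\<dots> \<le> 0" using t assms by simp
      finally show "2 * (1 - 1/t) + 2 * (1 - t) \<le> 0" .
    qed
  next
    show "continuous_on {u..1} (\<lambda>t. 2 * (t - 1 - ln t) - (1 - t)^2)" using assms
      by (intro continuous_intros) auto
  qed
  then show ?thesis by simp
qed

locale mono =
  fixes \<alpha> \<beta> r :: real
  assumes ap: "\<alpha> > 0" and bp: "\<beta> > 0" and rp: "r > 0"
begin

definition "mu = 2 * \<beta> * r / \<alpha>"
definition "KK = \<alpha>^2 / (4 * \<beta> * r)"
definition "lw y = lambertW (- exp (- (2 * \<beta> * r / \<alpha>) * y - 1))"
definition "GG w = (- ln (- w) - w - 1) / mu"
definition "VV y = (if 0 < y then KK * (lw y + 1)^2 else 0)"

lemma mu_pos: "mu > 0" using ap bp rp by (simp add: mu_def)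
lemma KK_pos: "KK > 0" using ap bp rp by (simp add: KK_def)
lemma KKmu: "2 * KK * mu = \<alpha>" using ap bp rp by (simp add: KK_def mu_def power2_eq_square field_simps)

lemma lw_alt: "lw y = lambertW (- exp (- mu * y - 1))" by (simp add: lw_def mu_def)

lemma lw_props: assumes "0 \<le> y"
  shows "-1 \<le> lw y \<and> lw y < 0 \<and> lw y * exp (lw y) = - exp (- mu * y - 1)"
  unfolding lw_alt
proof (rule lambertW_props)
  show "- exp (- 1) \<le> - exp (- mu * y - 1)" using assms mu_pos by simp
qed simp

lemma lw_0: "lw 0 = -1"
  unfolding lw_alt by (rule lambertW_eq) auto

lemma lw_gt: assumes "0 < y" shows "-1 < lw y"
proof -
  have "lw y \<noteq> -1"
  proof
    assume "lw y = -1"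
    with lw_props[of y] assms have "exp (-1) = exp (- mu * y - 1)" by auto
    then have "- mu * y = 0" by simp
    with assms mu_pos show False by simp
  qed
  with lw_props[of y] assms show ?thesis by auto
qed

lemma G_lw: assumes "0 \<le> y" shows "GG (lw y) = y"
proof -
  define w where "w = lw y"
  from lw_props[OF assms] have w: "-1 \<le> w" "w < 0" "w * exp w = - exp (- mu * y - 1)"
    by (auto simp: w_def)
  have e: "exp (- mu * y - 1) = -w * exp w" using w(3) by simp
  have "exp ((- mu * y - 1) - w) = exp (- mu * y - 1) / exp w" by (rule exp_diff)
  also have "\<dots> = -w * exp w / exp w" by (simp only: e)
  also have "\<dots> = -w" by simp
  finally have "exp (- mu * y - 1 - w) = -w" .
  then have "-w = exp (- mu * y - 1 - w)" by simp
  then have "ln (-w) = - mu * y - 1 - w" by simp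
  then show ?thesis using mu_pos by (simp add: GG_def w_def[symmetric] field_simps)
qed

lemma lw_G: assumes "-1 < w" "w < 0" shows "lw (GG w) = w"
  unfolding lw_alt
proof (rule lambertW_eq)
  have "- mu * GG w - 1 = ln (-w) + w" using mu_pos by (simp add: GG_def field_simps)
  then show "w * exp w = - exp (- mu * GG w - 1)" using assms by (simp add: exp_add)
qed (use assms in auto)

lemma G_pos: assumes "-1 < w" "w < 0" shows "GG w > 0"
  using ln_strict[of "-w"] assms mu_pos by (simp add: GG_def)

lemma G_deriv: assumes "w < 0" shows "(GG has_real_derivative (- 1 / w - 1) / mu) (at w)"
  unfolding GG_def[abs_def] using assms mu_pos
  by (auto intro!: derivative_eq_intros simp: field_simps)


lemma lw_cont: assumes "0 < y" shows "isCont lw y"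
proof -
  define w where "w = lw y"
  have w: "-1 < w" "w < 0" using lw_gt[OF assms] lw_props[of y] assms by (auto simp: w_def)
  define d where "d = min ((1 + w) / 2) (- w / 2)"
  have d: "0 < d" using w by (simp add: d_def)
  have "isCont lw (GG w)"
  proof (rule isCont_inverse_function[where f=GG and g=lw, OF d])
    fix z assume "\<bar>z - w\<bar> \<le> d"
    then have zz: "\<bar>z - w\<bar> \<le> (1+w)/2" "\<bar>z - w\<bar> \<le> -w/2" by (auto simp: d_def)
    have z1: "-1 < z" using abs_le_D2[OF zz(1)] w by (simp add: field_simps)
    have z2: "z < 0" using abs_le_D1[OF zz(2)] w by (simp add: field_simps)
    note z = z1 z2
    show "lw (GG z) = z" by (rule lw_G[OF z])
    show "isCont GG z" by (rule DERIV_isCont[OF G_deriv[OF z(2)]])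
  qed
  then show ?thesis using G_lw[of y] assms by (simp add: w_def)
qed

lemma lw_deriv: assumes "0 < y"
  shows "(lw has_real_derivative (- lw y * mu / (1 + lw y))) (at y)"
proof -
  define w where "w = lw y"
  have w: "-1 < w" "w < 0" using lw_gt[OF assms] lw_props[of y] assms by (auto simp: w_def)
  have D: "(- 1 / w - 1) / mu \<noteq> 0" using w mu_pos by (simp add: field_simps)
  have "(lw has_real_derivative inverse ((- 1 / w - 1) / mu)) (at y)"
  proof (rule DERIV_inverse_function[where a=0 and b="y+1"])
    show "(GG has_real_derivative (- 1 / w - 1) / mu) (at (lw y))"
      using G_deriv[OF w(2)] by (simp add: w_def)
  qed (use D assms G_lw lw_cont in auto)
  moreover have "inverse ((- 1 / w - 1) / mu) = - w * mu / (1 + w)"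
    using w mu_pos by (simp add: field_simps)
  ultimately show ?thesis by (simp add: w_def)
qed

lemma V_deriv: assumes "0 < y" shows "(VV has_real_derivative (- \<alpha> * lw y)) (at y)"
proof -
  define w where "w = lw y"
  have w: "-1 < w" "w < 0" using lw_gt[OF assms] lw_props[of y] assms by (auto simp: w_def)
  have "((\<lambda>z. KK * (lw z + 1)^2) has_real_derivative KK * (2 * (w + 1) * (- w * mu / (1 + w)))) (at y)"
    using lw_deriv[OF assms] by (auto intro!: derivative_eq_intros simp: w_def)
  moreover have "KK * (2 * (w + 1) * (- w * mu / (1 + w))) = - \<alpha> * w"
    using w KKmu[symmetric] by (simp add: field_simps)
  ultimately have "((\<lambda>z. KK * (lw z + 1)^2) has_real_derivative (- \<alpha> * lw y)) (at y)"
    by (simp add: w_def)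
  then show ?thesis
    by (rule has_field_derivative_transform_within_open[where S="{0<..}"]) (use assms in \<open>auto simp: VV_def\<close>)
qed

lemma V_nonneg: "0 \<le> VV y" using KK_pos by (simp add: VV_def)

lemma V_le: "VV y \<le> \<alpha> * \<bar>y\<bar>"
proof (cases "0 < y")
  case True
  define w where "w = lw y"
  have w: "-1 < w" "w < 0" using lw_gt[OF True] lw_props[of y] True by (auto simp: w_def)
  have "(1 + w)^2 \<le> 2 * (- w - 1 - ln (- w))" using ln_quad[of "-w"] w by simp
  then have "KK * (w + 1)^2 \<le> KK * (2 * (- w - 1 - ln (- w)))"
    using KK_pos by (intro mult_left_mono) (auto simp: add.commute)
  also have "\<dots> = \<alpha> * GG w" using KKmu[symmetric] mu_pos by (simp add: GG_def field_simps)
  also have "\<dots> = \<alpha> * y" using G_lw[of y] True by (simp add: w_def)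
  finally show ?thesis using True by (simp add: VV_def w_def)
next
  case False
  have "0 \<le> \<alpha> * \<bar>y\<bar>" using ap by simp
  then show ?thesis using False by (simp add: VV_def)
qed

lemma HJB: assumes "0 < y"
  shows "q * ((\<alpha> - q) / \<beta>) - (- \<alpha> * lw y) * ((\<alpha> - q) / \<beta>) \<le> r * VV y"
proof -
  define w where "w = lw y"
  have "(q + \<alpha> * w) * (\<alpha> - q) \<le> \<alpha>^2 * (1 + w)^2 / 4"
  proof -
    have "\<alpha>^2 * (1 + w)^2 / 4 - (q + \<alpha> * w) * (\<alpha> - q) = (q + \<alpha> * w - (\<alpha> - q))^2 / 4"
      by (simp add: power2_eq_square algebra_simps)
    moreover have "(q + \<alpha> * w - (\<alpha> - q))^2 / 4 \<ge> 0" by simp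
    ultimately show ?thesis by linarith
  qed
  then have "(q + \<alpha> * w) * (\<alpha> - q) / \<beta> \<le> \<alpha>^2 * (1 + w)^2 / 4 / \<beta>"
    using bp by (intro divide_right_mono) auto
  moreover have "r * VV y = \<alpha>^2 * (1 + w)^2 / 4 / \<beta>"
    using assms rp by (simp add: VV_def KK_def w_def add.commute)
  moreover have "q * ((\<alpha> - q) / \<beta>) - (- \<alpha> * w) * ((\<alpha> - q) / \<beta>) = (q + \<alpha> * w) * (\<alpha> - q) / \<beta>"
    by (simp add: algebra_simps add_divide_distrib diff_divide_distrib)
  ultimately show ?thesis by (simp add: w_def)
qed


lemma V_cont: "isCont VV y"
proof (cases "0 < y")
  case True then show ?thesis by (rule DERIV_isCont[OF V_deriv])
next
  case False
  then have V0: "VV y = 0" by (simp add: VV_def)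
  have "((\<lambda>z. VV z - VV y) \<longlongrightarrow> 0) (at y)"
  proof (cases "y = 0")
    case True
    have lim: "((\<lambda>z. \<alpha> * \<bar>z\<bar>) \<longlongrightarrow> 0) (at 0)"
    proof -
      have "((\<lambda>z. \<alpha> * \<bar>z\<bar>) \<longlongrightarrow> \<alpha> * \<bar>0\<bar>) (at (0::real))" by (intro tendsto_intros)
      then show ?thesis by simp
    qed
    have bnd: "norm (VV z - VV y) \<le> \<alpha> * \<bar>z\<bar>" for z
    proof -
      have "norm (VV z - VV y) = VV z" using V0 V_nonneg[of z] by simp
      also have "\<dots> \<le> \<alpha> * \<bar>z\<bar>" by (rule V_le)
      finally show ?thesis .
    qed
    show ?thesis unfolding True
      by (rule Lim_null_comparison[OF always_eventually lim]) (use bnd True in blast)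
  next
    case False
    with \<open>\<not> 0 < y\<close> have "y < 0" by simp
    have "eventually (\<lambda>z. z < 0) (at y)"
      using order_tendstoD(2)[OF tendsto_ident_at \<open>y < 0\<close>] .
    then have "eventually (\<lambda>z. VV z - VV y = 0) (at y)"
      by eventually_elim (simp add: VV_def \<open>\<not> 0 < y\<close>)
    then show ?thesis by (rule tendsto_eventually)
  qed
  then show ?thesis unfolding isCont_def by (rule LIM_zero_cancel)
qed

definition "Vd y = (if 0 < y then - \<alpha> * lw y else 0)"

end

locale traj = mono +
  fixes x :: real and p X :: "real \<Rightarrow> real"
  assumes x0: "0 \<le> x" and adm: "admissibleM \<alpha> \<beta> r x p X"
begin

definition "dem t = demandM \<alpha> \<beta> (p (X t))"
definition "phi t = exp (- r * t) * VV (X t)"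
definition "psi t = exp (- r * t) * (r * VV (X t) + Vd (X t) * dem t)"

lemma X0: "X 0 = x" using adm by (simp add: admissibleM_def)

lemma Xd_within: "0 \<le> t \<Longrightarrow> (X has_real_derivative - dem t) (at t within {0..})"
  using adm by (simp add: admissibleM_def dem_def)

lemma Xd: assumes "0 < t" shows "(X has_real_derivative - dem t) (at t)"
proof -
  have "(X has_real_derivative - dem t) (at t within {0<..})"
    by (rule has_field_derivative_subset[OF Xd_within]) (use assms in auto)
  then show ?thesis using at_within_open[of t "{0<..}"] assms by simp
qed

lemma X_cont: "continuous_on {0..} X"
  by (rule DERIV_continuous_on[OF Xd_within]) auto

lemma Xc: "0 < t \<Longrightarrow> isCont X t" by (rule DERIV_isCont[OF Xd])

lemma rev_le: "revenueM \<alpha> \<beta> r p X t \<le> psi t"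
proof (cases "0 < X t")
  case True
  have h: "p (X t) * dem t - (- \<alpha> * lw (X t)) * dem t \<le> r * VV (X t)"
    unfolding dem_def demandM_def by (rule HJB[OF True])
  have Vd: "Vd (X t) = - \<alpha> * lw (X t)" using True by (simp add: Vd_def)
  have "p (X t) * dem t \<le> r * VV (X t) + Vd (X t) * dem t"
    unfolding Vd using h by linarith
  then have "exp (- r * t) * (p (X t) * dem t) \<le> exp (- r * t) * (r * VV (X t) + Vd (X t) * dem t)"
    by (rule mult_left_mono) simp
  moreover have "revenueM \<alpha> \<beta> r p X t = exp (- r * t) * (p (X t) * dem t)"
    unfolding revenueM_def dem_def using True by (simp only: if_True mult_1_right mult.assoc)
  ultimately show ?thesis by (simp only: psi_def)
next
  case False
  then have "revenueM \<alpha> \<beta> r p X t = 0" unfolding revenueM_def by simp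
  moreover have "psi t = 0" using False unfolding psi_def VV_def Vd_def by simp
  ultimately show ?thesis by simp
qed

lemma VX_deriv:
  assumes t: "0 < t" and nz: "\<not> (X t = 0 \<and> dem t \<noteq> 0)"
  shows "((\<lambda>s. VV (X s)) has_real_derivative Vd (X t) * (- dem t)) (at t)"
proof -
  consider "0 < X t" | "X t < 0" | "X t = 0" "dem t = 0" using nz by linarith
  then show ?thesis
  proof cases
    case 1
    have "Vd (X t) = - \<alpha> * lw (X t)" using 1 by (simp add: Vd_def)
    then show ?thesis using DERIV_chain2[OF V_deriv[OF 1] Xd[OF t]] by simp
  next
    case 2
    have VXt: "VV (X t) = 0" "Vd (X t) = 0" using 2 by (simp_all add: VV_def Vd_def)
    have "eventually (\<lambda>s. X s < 0) (at t)"
      using order_tendstoD(2)[OF Xc[OF t, unfolded isCont_def] 2] .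
    then have "eventually (\<lambda>s. VV (X s) = 0) (at t)"
      by eventually_elim (simp add: VV_def)
    then have "eventually (\<lambda>s. (VV (X s) - VV (X t)) / (s - t) = 0) (at t)"
      by eventually_elim (simp only: VXt diff_zero div_0)
    then have "((\<lambda>s. (VV (X s) - VV (X t)) / (s - t)) \<longlongrightarrow> 0) (at t)"
      by (rule tendsto_eventually)
    then show ?thesis unfolding has_field_derivative_iff VXt(2) by simp
  next
    case 3
    have VXt: "VV (X t) = 0" "Vd (X t) = 0" using 3 by (simp_all add: VV_def Vd_def)
    have dX: "((\<lambda>s. (X s - X t) / (s - t)) \<longlongrightarrow> 0) (at t)"
      using Xd[OF t] 3 by (simp add: has_field_derivative_iff)
    have lim: "((\<lambda>s. \<alpha> * \<bar>(X s - X t) / (s - t)\<bar>) \<longlongrightarrow> 0) (at t)"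
    proof -
      have "((\<lambda>s. \<alpha> * \<bar>(X s - X t) / (s - t)\<bar>) \<longlongrightarrow> \<alpha> * \<bar>0\<bar>) (at t)"
        by (intro tendsto_intros dX)
      then show ?thesis by simp
    qed
    have bnd: "norm ((VV (X s) - VV (X t)) / (s - t)) \<le> \<alpha> * \<bar>(X s - X t) / (s - t)\<bar>" for s
    proof -
      have "VV (X s) \<le> \<alpha> * \<bar>X s\<bar>" by (rule V_le)
      then have "VV (X s) / \<bar>s - t\<bar> \<le> \<alpha> * \<bar>X s\<bar> / \<bar>s - t\<bar>"
        by (rule divide_right_mono) simp
      moreover have "norm ((VV (X s) - VV (X t)) / (s - t)) = VV (X s) / \<bar>s - t\<bar>"
        using V_nonneg[of "X s"] by (simp add: VXt abs_divide)
      moreover have "\<alpha> * \<bar>(X s - X t) / (s - t)\<bar> = \<alpha> * \<bar>X s\<bar> / \<bar>s - t\<bar>"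
        using 3 by (simp add: abs_divide)
      ultimately show ?thesis by linarith
    qed
    have "((\<lambda>s. (VV (X s) - VV (X t)) / (s - t)) \<longlongrightarrow> 0) (at t)"
      by (rule Lim_null_comparison[OF always_eventually lim]) (use bnd in blast)
    then show ?thesis unfolding has_field_derivative_iff VXt(2) by simp
  qed
qed

lemma phi_deriv:
  assumes t: "0 < t" and nz: "\<not> (X t = 0 \<and> dem t \<noteq> 0)"
  shows "(phi has_real_derivative - psi t) (at t)"
proof -
  have e: "((\<lambda>s. exp (- r * s)) has_real_derivative - r * exp (- r * t)) (at t)"
    by (auto intro!: derivative_eq_intros)
  have "((\<lambda>s. exp (- r * s) * VV (X s)) has_real_derivative
     (- r * exp (- r * t)) * VV (X t) + Vd (X t) * (- dem t) * exp (- r * t)) (at t)"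
    by (rule DERIV_mult[OF e VX_deriv[OF t nz]])
  then show ?thesis unfolding phi_def[abs_def] psi_def
    by (rule DERIV_cong) (simp add: algebra_simps)
qed


lemma dem_eq: "X s = X a \<Longrightarrow> dem s = dem a" by (simp add: dem_def)

lemma zero_unique:
  assumes ab: "0 < a" "a < b" and X: "X a = 0" "X b = 0" and da: "dem a \<noteq> 0"
  shows False
proof -
  define c where "c = - dem a"
  have "c \<noteq> 0" using da by (simp add: c_def)
  then have cc: "0 < c * c" by (metis not_real_square_gt_zero)
  define Y where "Y s = c * X s" for s
  have YD: "(Y has_real_derivative c * c) (at s)" if "0 < s" "X s = 0" for s
  proof -
    have "dem s = dem a" using that X by (intro dem_eq) simp
    then show ?thesis unfolding Y_def[abs_def] using DERIV_cmult[OF Xd[OF that(1)], of c]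
      by (simp add: c_def)
  qed
  have Yc: "isCont Y s" if "0 < s" for s unfolding Y_def[abs_def]
    by (intro continuous_intros Xc that)
  have Ya: "Y a = 0" "Y b = 0" using X by (simp_all add: Y_def)
  obtain d where d: "d > 0" "\<forall>h>0. h < d \<longrightarrow> Y a < Y (a + h)"
    using DERIV_pos_inc_right[OF YD[OF ab(1) X(1)] cc] by blast
  define a1 where "a1 = a + min d (b - a) / 2"
  have a1: "a < a1" "a1 < b" using d ab by (auto simp: a1_def min_def field_simps)
  have Ya1: "0 < Y a1" using d(2)[rule_format, of "min d (b - a) / 2"] d ab Ya
    by (auto simp: a1_def min_def)
  define A where "A = {a1..b} \<inter> Y -` {..0}"
  have "continuous_on {a1..b} Y"
    using a1 ab by (intro continuous_at_imp_continuous_on ballI Yc) auto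
  then have clA: "closed A" unfolding A_def by (rule continuous_closed_preimage) auto
  have bA: "b \<in> A" using a1 Ya by (simp add: A_def)
  have bdd: "bdd_below A" by (rule bdd_belowI[of _ a1]) (auto simp: A_def)
  define t0 where "t0 = Inf A"
  have t0A: "t0 \<in> A" unfolding t0_def using closed_contains_Inf[OF _ bdd clA] bA by blast
  have low: "t0 \<le> s" if "s \<in> A" for s unfolding t0_def by (rule cInf_lower[OF that bdd])
  have t0: "a1 \<le> t0" "t0 \<le> b" "Y t0 \<le> 0" using t0A by (auto simp: A_def)
  have Yt0: "Y t0 = 0"
  proof (rule ccontr)
    assume "Y t0 \<noteq> 0"
    with t0 have neg: "Y t0 < 0" by simp
    have "\<exists>s. a1 \<le> s \<and> s \<le> t0 \<and> Y s = 0"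
      by (rule IVT2) (use neg Ya1 t0 a1 ab Yc in auto)
    then obtain s where s: "a1 \<le> s" "s \<le> t0" "Y s = 0" by blast
    then have "s \<in> A" using t0 by (auto simp: A_def)
    then have "t0 \<le> s" by (rule low)
    with s neg show False by simp
  qed
  have t0pos: "0 < t0" using t0 a1 ab by simp
  have Xt0: "X t0 = 0" using Yt0 cc by (auto simp: Y_def)
  have t0gt: "a1 < t0" using t0 Yt0 Ya1 by (cases "a1 = t0") auto
  obtain d' where d': "d' > 0" "\<forall>h>0. h < d' \<longrightarrow> Y (t0 - h) < Y t0"
    using DERIV_pos_inc_left[OF YD[OF t0pos Xt0] cc] by blast
  define h where "h = min d' (t0 - a1) / 2"
  have h: "0 < h" "h < d'" "h < t0 - a1" using d' t0gt by (auto simp: h_def min_def)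
  have "Y (t0 - h) < 0" using d'(2)[rule_format, OF h(1,2)] Yt0 by simp
  then have "t0 - h \<in> A" using h t0 by (auto simp: A_def)
  then have "t0 \<le> t0 - h" by (rule low)
  with h show False by simp
qed

lemma finite_S: "finite {s \<in> {0<..<T}. X s = 0 \<and> dem s \<noteq> 0}" (is "finite ?S")
proof (cases "?S = {}")
  case False
  then obtain a where a: "a \<in> ?S" by blast
  have "?S \<subseteq> {a}"
  proof
    fix b assume b: "b \<in> ?S"
    have "\<not> a < b" using zero_unique[of a b] a b by auto
    moreover have "\<not> b < a" using zero_unique[of b a] a b by auto
    ultimately show "b \<in> {a}" by simp
  qed
  then show ?thesis by (rule finite_subset) simp
next
  case True
  show ?thesis by (subst True) (rule finite.emptyI)
qed

lemma phi_cont: "continuous_on {0..T} phi"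
proof -
  have "continuous_on {0..T} X" by (rule continuous_on_subset[OF X_cont]) auto
  moreover have "continuous_on UNIV VV" by (intro continuous_at_imp_continuous_on ballI V_cont)
  ultimately have "continuous_on {0..T} (\<lambda>s. VV (X s))"
    using continuous_on_compose2[of UNIV VV "{0..T}" X] by auto
  then show ?thesis unfolding phi_def[abs_def] by (intro continuous_intros)
qed

lemma rev_int: "set_integrable lborel {0..} (revenueM \<alpha> \<beta> r p X)"
  using adm by (simp add: admissibleM_def)

lemma int_bound:
  assumes T: "0 \<le> T"
  shows "(LINT s:{0..T}|lborel. revenueM \<alpha> \<beta> r p X s) \<le> VV x"
proof -
  have "((\<lambda>s. - psi s) has_integral (phi T - phi 0)) {0..T}"
  proof (rule fundamental_theorem_of_calculus_interior_strong[OF finite_S T _ phi_cont])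
    fix s assume s: "s \<in> {0<..<T} - {s \<in> {0<..<T}. X s = 0 \<and> dem s \<noteq> 0}"
    then show "(phi has_vector_derivative - psi s) (at s)"
      using phi_deriv[of s] by (auto simp: has_real_derivative_iff_has_vector_derivative)
  qed
  from has_integral_neg[OF this] have psiI: "(psi has_integral (phi 0 - phi T)) {0..T}"
    by simp
  have ri: "set_integrable lborel {0..T} (revenueM \<alpha> \<beta> r p X)"
    by (rule set_integrable_subset[OF rev_int]) auto
  have "(LINT s:{0..T}|lborel. revenueM \<alpha> \<beta> r p X s) = integral {0..T} (revenueM \<alpha> \<beta> r p X)"
    using set_borel_integral_eq_integral(2)[OF ri] by simp
  also have "\<dots> \<le> integral {0..T} psi"
    by (rule integral_le[OF set_borel_integral_eq_integral(1)[OF ri]])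
       (use psiI rev_le in auto)
  also have "\<dots> = phi 0 - phi T" using psiI by (rule integral_unique)
  also have "\<dots> \<le> phi 0" using V_nonneg[of "X T"] by (simp add: phi_def)
  also have "\<dots> = VV x" by (simp add: phi_def X0)
  finally show ?thesis .
qed

lemma upper: "(LINT s:{0..}|lborel. revenueM \<alpha> \<beta> r p X s) \<le> VV x"
proof (rule tendsto_upperbound[OF tendsto_set_lebesgue_integral_at_top[OF _ rev_int]])
  show "\<forall>\<^sub>F T in at_top. (LINT s:{0..T}|lborel. revenueM \<alpha> \<beta> r p X s) \<le> VV x"
    using eventually_ge_at_top[of 0] by eventually_elim (rule int_bound)
qed auto

end

locale opt = mono +
  fixes x :: real
  assumes x0: "0 \<le> x"
begin

definition "w0 = lw x"
definition "tau = - ln (- w0) / r"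
definition "wt t = w0 * exp (r * t)"
definition "Gs t = GG (wt t)"
definition "Xo t = (if t \<le> tau then Gs t else 0)"
definition "po y = (if y \<le> 0 then \<alpha> else \<alpha> * (1 - lw y) / 2)"
definition "ff t = \<alpha>^2 / (4 * \<beta>) * (exp (- r * t) - w0^2 * exp (r * t))"
definition "FF t = \<alpha>^2 / (4 * \<beta>) * (- exp (- r * t) / r - w0^2 * exp (r * t) / r)"

lemma w0: "-1 \<le> w0" "w0 < 0" using lw_props[OF x0] by (auto simp: w0_def)

lemma tau_nonneg: "0 \<le> tau"
proof -
  have "ln (- w0) \<le> 0" using w0 by simp
  then show ?thesis using rp by (simp add: tau_def divide_nonpos_pos)
qed

lemma exp_tau: "exp (r * tau) = - 1 / w0" "exp (- r * tau) = - w0"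
proof -
  have "r * tau = - ln (- w0)" using rp by (simp add: tau_def)
  then show "exp (r * tau) = - 1 / w0" using w0 by (simp add: exp_minus field_simps)
  have "- r * tau = ln (- w0)" using rp by (simp add: tau_def)
  then show "exp (- r * tau) = - w0" using w0 by simp
qed

lemma wt_tau: "wt tau = -1" using exp_tau w0 by (simp add: wt_def)

lemma wt_neg: "wt t < 0" using w0 by (simp add: wt_def mult_neg_pos)

lemma wt_gt: assumes "t < tau" shows "-1 < wt t"
proof -
  have "exp (r * t) < exp (r * tau)" using assms rp by simp
  then have "w0 * exp (r * tau) < w0 * exp (r * t)" using w0 by (simp add: mult_less_cancel_left_neg)
  then show ?thesis using wt_tau by (simp add: wt_def)
qed

lemma Gs_tau: "Gs tau = 0" by (simp add: Gs_def wt_tau GG_def)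

lemma Xo_pos: "t < tau \<Longrightarrow> 0 < Xo t"
  using G_pos[OF wt_gt wt_neg] by (simp add: Xo_def Gs_def)

lemma Xo_zero: "tau \<le> t \<Longrightarrow> Xo t = 0"
  using Gs_tau by (auto simp: Xo_def)

lemma lw_Xo: "t < tau \<Longrightarrow> lw (Xo t) = wt t"
  using lw_G[OF wt_gt wt_neg] by (simp add: Xo_def Gs_def)

lemma Xo0: "Xo 0 = x"
  using tau_nonneg G_lw[OF x0] by (simp add: Xo_def Gs_def wt_def w0_def)

lemma Gs_deriv: "(Gs has_real_derivative - r * (1 + wt t) / mu) (at t)"
proof -
  have "((\<lambda>s. GG (wt s)) has_real_derivative (- 1 / wt t - 1) / mu * (w0 * (exp (r * t) * r))) (at t)"
    unfolding wt_def[abs_def]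
    by (rule DERIV_chain2[where f=GG and g="\<lambda>s. w0 * exp (r * s)" and x=t,
          OF G_deriv[OF wt_neg[of t, unfolded wt_def]]])
       (auto intro!: derivative_eq_intros)
  moreover have "(- 1 / wt t - 1) / mu * (w0 * (exp (r * t) * r)) = - r * (1 + wt t) / mu"
    using wt_neg[of t] mu_pos w0 rp by (simp add: wt_def field_simps)
  ultimately show ?thesis by (simp add: Gs_def[abs_def])
qed

lemma dem_o: "t < tau \<Longrightarrow> demandM \<alpha> \<beta> (po (Xo t)) = r * (1 + wt t) / mu"
  using Xo_pos[of t] lw_Xo[of t] ap bp rp
  by (simp add: po_def demandM_def mu_def field_simps)

lemma dem_o2: "tau \<le> t \<Longrightarrow> demandM \<alpha> \<beta> (po (Xo t)) = 0"
  using Xo_zero by (simp add: po_def demandM_def)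

lemma Xo_deriv: assumes "0 \<le> t"
  shows "(Xo has_real_derivative - demandM \<alpha> \<beta> (po (Xo t))) (at t within {0..})"
proof -
  consider "t < tau" | "tau < t" | "t = tau" by linarith
  then show ?thesis
  proof cases
    case 1
    have "(Xo has_real_derivative - r * (1 + wt t) / mu) (at t)"
      by (rule has_field_derivative_transform_within_open[OF Gs_deriv, where S="{..<tau}"])
         (use 1 in \<open>auto simp: Xo_def\<close>)
    then show ?thesis using dem_o[OF 1] by (auto intro: has_field_derivative_at_within)
  next
    case 2
    have "((\<lambda>s. 0) has_real_derivative 0) (at t)" by simp
    then have "(Xo has_real_derivative 0) (at t)"
      by (rule has_field_derivative_transform_within_open[where S="{tau<..}"])
         (use 2 Xo_zero in auto)
    then show ?thesis using dem_o2[of t] 2 by (auto intro: has_field_derivative_at_within)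
  next
    case 3
    have d0: "- r * (1 + wt tau) / mu = 0" by (simp add: wt_tau)
    have L: "((\<lambda>s. (Xo s - Xo tau) / (s - tau)) \<longlongrightarrow> 0) (at tau within {0..tau})"
    proof -
      have "(Gs has_real_derivative 0) (at tau)" using Gs_deriv[of tau] unfolding d0 .
      then have "((\<lambda>s. (Gs s - Gs tau) / (s - tau)) \<longlongrightarrow> 0) (at tau)"
        by (simp add: has_field_derivative_iff)
      then have "((\<lambda>s. (Gs s - Gs tau) / (s - tau)) \<longlongrightarrow> 0) (at tau within {0..tau})"
        by (rule tendsto_within_subset) simp
      then show ?thesis
        by (rule Lim_transform_within[where d=1]) (auto simp: Xo_def)
    qed
    have R: "((\<lambda>s. (Xo s - Xo tau) / (s - tau)) \<longlongrightarrow> 0) (at tau within {tau..})"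
    proof -
      have "((\<lambda>s. 0::real) \<longlongrightarrow> 0) (at tau within {tau..})" by simp
      then show ?thesis
        by (rule Lim_transform_within[where d=1]) (auto simp: Xo_zero)
    qed
    have "{0..} = {0..tau} \<union> {tau..}" using tau_nonneg by auto
    then have "((\<lambda>s. (Xo s - Xo tau) / (s - tau)) \<longlongrightarrow> 0) (at tau within {0..})"
      using L R by (simp add: Lim_within_Un)
    then show ?thesis using 3 dem_o2[of tau] by (simp add: has_field_derivative_iff)
  qed
qed

lemma po_nonneg: "0 \<le> po y"
proof (cases "y \<le> 0")
  case False
  then have "lw y < 0" using lw_props[of y] by simp
  then show ?thesis using ap False by (simp add: po_def)
qed (use ap in \<open>simp add: po_def\<close>)

lemma rev_eq: "indicator {0..} t * revenueM \<alpha> \<beta> r po Xo t = indicator {0..tau} t * ff t"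
proof -
  consider "t < 0" | "0 \<le> t" "t < tau" | "tau \<le> t" by linarith
  then show ?thesis
  proof cases
    case 1 then show ?thesis using tau_nonneg by (simp add: indicator_def)
  next
    case 2
    have "revenueM \<alpha> \<beta> r po Xo t = exp (- r * t) * (\<alpha> * (1 - wt t) / 2) * (r * (1 + wt t) / mu)"
      using Xo_pos[OF 2(2)] lw_Xo[OF 2(2)] dem_o[OF 2(2)] by (simp add: revenueM_def po_def)
    also have "\<dots> = ff t"
      using ap bp rp by (simp add: ff_def wt_def mu_def power2_eq_square exp_minus field_simps)
    finally show ?thesis using 2 by (simp add: indicator_def)
  next
    case 3
    have "revenueM \<alpha> \<beta> r po Xo t = 0" using Xo_zero[OF 3] by (simp add: revenueM_def)
    moreover have "t = tau \<Longrightarrow> ff t = 0"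
      using exp_tau w0 by (simp add: ff_def power2_eq_square)
    ultimately show ?thesis using 3 by (auto simp: indicator_def)
  qed
qed

lemma ff_cont: "continuous_on A ff" unfolding ff_def by (intro continuous_intros)

lemma rev_integrable: "set_integrable lborel {0..} (revenueM \<alpha> \<beta> r po Xo)"
proof -
  have "set_integrable lborel {0..tau} ff" by (rule borel_integrable_atLeastAtMost'[OF ff_cont])
  then show ?thesis unfolding set_integrable_def using rev_eq by simp
qed

lemma rev_value: "(LINT t:{0..}|lborel. revenueM \<alpha> \<beta> r po Xo t) = KK * (w0 + 1)^2"
proof -
  have "(LINT t:{0..}|lborel. revenueM \<alpha> \<beta> r po Xo t) = (LINT t:{0..tau}|lborel. ff t)"
    unfolding set_lebesgue_integral_def using rev_eq by simp
  also have "\<dots> = (LBINT t=ereal 0..ereal tau. ff t)" using interval_integral_Icc[OF tau_nonneg, of ff] by simp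
  also have "\<dots> = FF tau - FF 0"
  proof (rule interval_integral_FTC_finite)
    show "continuous_on {min 0 tau..max 0 tau} ff" by (rule ff_cont)
    fix t
    show "(FF has_vector_derivative ff t) (at t within {min 0 tau..max 0 tau})"
      unfolding has_real_derivative_iff_has_vector_derivative[symmetric] FF_def[abs_def] ff_def
      using rp bp by (auto intro!: derivative_eq_intros simp: field_simps)
  qed
  also have "\<dots> = KK * (w0 + 1)^2"
    using exp_tau w0 ap bp rp by (simp add: FF_def KK_def power2_eq_square field_simps)
  finally show ?thesis .
qed

lemma adm_o: "admissibleM \<alpha> \<beta> r x po Xo"
  unfolding admissibleM_def using po_nonneg Xo0 Xo_deriv rev_integrable by auto

end

theorem proposition3p1:
  fixes \<alpha> \<beta> r x :: real
  assumes "\<alpha> > 0" and "\<beta> > 0" and "r > 0" and "x \<ge> 0"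
  shows "valueM \<alpha> \<beta> r x =
    \<alpha>^2 / (4 * \<beta> * r) *
      (lambertW (- exp (- (2 * \<beta> * r / \<alpha>) * x - 1)) + 1)^2"
proof -
  interpret opt \<alpha> \<beta> r x using assms by unfold_locales
  have VVx: "VV x = KK * (w0 + 1)^2"
  proof (cases "x = 0")
    case True
    have a: "w0 = -1" unfolding w0_def using True lw_0 by simp
    have b: "VV x = 0" using True by (simp add: VV_def)
    show ?thesis unfolding a b by simp
  next
    case False then show ?thesis using assms by (simp add: VV_def w0_def)
  qed
  have rhs: "\<alpha>^2 / (4 * \<beta> * r) * (lambertW (- exp (- (2 * \<beta> * r / \<alpha>) * x - 1)) + 1)^2
     = KK * (w0 + 1)^2" by (simp add: KK_def w0_def lw_def)
  have "valueM \<alpha> \<beta> r x = KK * (w0 + 1)^2"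
    unfolding valueM_def
  proof (rule cSup_eq_maximum)
    show "KK * (w0 + 1)^2 \<in> {J. \<exists>p X. admissibleM \<alpha> \<beta> r x p X \<and>
                  J = (LINT t:{0..}|lborel. revenueM \<alpha> \<beta> r p X t)}"
    proof (intro CollectI exI conjI)
      show "admissibleM \<alpha> \<beta> r x po Xo" by (rule adm_o)
      show "KK * (w0 + 1)^2 = (LINT t:{0..}|lborel. revenueM \<alpha> \<beta> r po Xo t)"
        using rev_value by simp
    qed
  next
    fix J assume "J \<in> {J. \<exists>p X. admissibleM \<alpha> \<beta> r x p X \<and>
                  J = (LINT t:{0..}|lborel. revenueM \<alpha> \<beta> r p X t)}"
    then obtain p X where pX: "admissibleM \<alpha> \<beta> r x p X"
      and J: "J = (LINT t:{0..}|lborel. revenueM \<alpha> \<beta> r p X t)" by blast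
    interpret traj \<alpha> \<beta> r x p X using assms pX by unfold_locales
    show "J \<le> KK * (w0 + 1)^2" using upper J VVx by simp
  qed
  then show ?thesis using rhs by simp
qed

end
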